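(* For $z\in(0,1)$ and $\rho>-1$ define $$g(z,\rho)=\frac{\rho}{1+\rho}+\frac{1-z+z^{1/(1+\rho)}-z^{\rho/(1+\rho)}}{(1+z)\ln z}.$$ Then $g(z,\rho)\ge0$ for all $z\in(0,1)$ and all $\rho>-1$.
   Context: $\ln$ denotes the natural logarithm. *)

theory Defs
  imports Complex_Main
begin

definition g :: "real \<Rightarrow> real \<Rightarrow> real" where
  "g z \<rho> = \<rho> / (1 + \<rho>) +
     (1 - z + z powr (1 / (1 + \<rho>)) - z powr (\<rho> / (1 + \<rho>))) / ((1 + z) * ln z)"

end

theory Submission
  imports Defs
begin

lemma key_le:
  fixes z x :: real
  assumes "0 < z" "z < 1" "0 \<le> x" "x \<le> 1"
  shows "exp (x * ln z) + exp ((1 - x) * ln z) \<le> 1 + z"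
proof -
  have L: "ln z < 0" using assms by simp
  have e1: "exp (x * ln z) \<le> 1" using L assms by (simp add: mult_nonneg_nonpos)
  have e2: "exp ((1-x) * ln z) \<le> 1" using L assms by (simp add: mult_nonneg_nonpos)
  have p: "exp (x * ln z) * exp ((1 - x) * ln z) = z"
    using assms by (simp add: exp_add[symmetric] algebra_simps)
  have "0 \<le> (1 - exp (x * ln z)) * (1 - exp ((1 - x) * ln z))" using e1 e2 by simp
  then show ?thesis using p by (simp add: algebra_simps)
qed

lemma key_ge:
  fixes z x :: real
  assumes "0 < z" "z < 1" "1 \<le> x"
  shows "exp (x * ln z) + exp ((1 - x) * ln z) \<ge> 1 + z"
proof -
  have L: "ln z < 0" using assms by simp
  have e1: "exp (x * ln z) \<le> 1" using L assms by (simp add: mult_nonneg_nonpos)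
  have e2: "exp ((1-x) * ln z) \<ge> 1" using L assms by (simp add: mult_nonpos_nonpos)
  have p: "exp (x * ln z) * exp ((1 - x) * ln z) = z"
    using assms by (simp add: exp_add[symmetric] algebra_simps)
  have "0 \<ge> (1 - exp (x * ln z)) * (1 - exp ((1 - x) * ln z))"
    using e1 e2 by (simp add: mult_nonneg_nonpos)
  then show ?thesis using p by (simp add: algebra_simps)
qed

theorem mainTheorem3:
  fixes z \<rho> :: real
  assumes "0 < z" and "z < 1" and "\<rho> > -1"
  shows "g z \<rho> \<ge> 0"
proof -
  define L where "L = ln z"
  have L: "L < 0" using assms by (simp add: L_def)
  define F where "F = (\<lambda>a. (1-a)*(1+z)*L + 1 - z + exp (a*L) - exp ((1-a)*L))"
  define F' where "F' = (\<lambda>a. L * (exp (a*L) + exp ((1-a)*L) - 1 - z))"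
  have D: "\<And>a. (F has_real_derivative F' a) (at a)"
    unfolding F_def F'_def
    by (auto intro!: derivative_eq_intros simp: algebra_simps)
  define a where "a = 1 / (1 + \<rho>)"
  have apos: "a > 0" using assms by (simp add: a_def)
  have F1: "F 1 = 0" by (simp add: F_def L_def assms)
  have Fa: "F a \<le> 0"
  proof (cases "a \<le> 1")
    case True
    have "F a \<le> F 1"
    proof (rule DERIV_nonneg_imp_nondecreasing[OF True])
      fix x assume "a \<le> x" "x \<le> 1"
      then have "exp (x * L) + exp ((1 - x) * L) \<le> 1 + z"
        using key_le[of z x] assms apos by (simp add: L_def)
      then have "F' x \<ge> 0" using L by (simp add: F'_def mult_nonpos_nonpos)
      then show "\<exists>y. (F has_real_derivative y) (at x) \<and> 0 \<le> y" using D by blast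
    qed
    then show ?thesis using F1 by simp
  next
    case False
    have "F 1 \<ge> F a"
    proof (rule DERIV_nonpos_imp_nonincreasing[of 1 a])
      show "1 \<le> a" using False by simp
    next
      fix x assume "1 \<le> x" "x \<le> a"
      then have "exp (x * L) + exp ((1 - x) * L) \<ge> 1 + z"
        using key_ge[of z x] assms by (simp add: L_def)
      then have "F' x \<le> 0" using L by (simp add: F'_def mult_nonpos_nonneg)
      then show "\<exists>y. (F has_real_derivative y) (at x) \<and> y \<le> 0" using D by blast
    qed
    then show ?thesis using F1 by simp
  qed
  have r1: "\<rho> / (1 + \<rho>) = 1 - a" using assms by (simp add: a_def field_simps)
  have p1: "z powr (1 / (1 + \<rho>)) = exp (a * L)" using assms
    by (simp add: powr_def a_def L_def mult.commute)
  have p2: "z powr (\<rho> / (1 + \<rho>)) = exp ((1-a) * L)" using assms r1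
    by (simp add: powr_def L_def mult.commute)
  have Dn: "(1 + z) * L < 0" using L assms by (simp add: mult_pos_neg)
  have "g z \<rho> = F a / ((1 + z) * L)"
    unfolding g_def p1 p2 r1 F_def using Dn assms by (simp add: L_def powr_def field_simps)
  then show ?thesis using Fa Dn by (simp add: divide_nonpos_neg)
qed

end
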